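(* Let $\alpha>0$ and $\eta(\tau;\alpha)=\dfrac{\Phi(\tau)}{\Phi(\tau)+\Phi(\alpha(1-\tau))}$ with $\Phi(\tau)=\tau^{m+1}$. Then $\eta(\cdot;\alpha):[0,1]\to\mathbb{R}$ is a transition function, i.e., for all $\mu\in\{1,\dots,m\}$: (i) $\eta^{(\mu)}(\tau;\alpha)$ exists $\forall\tau\in[0,1]$; (ii) $\eta^{(\mu)}(0;\alpha)=\eta^{(\mu)}(1;\alpha)=0$; (iii) $\eta(0;\alpha)=0$, $\eta(1;\alpha)=1$; (iv) $\lim_{\alpha\to0}\eta(\tau;\alpha)=1$ for all $\tau\in(0,1]$.
   Context: $m\in\mathbb{N}$ is the order of the integrator dynamics considered; $\eta^{(\mu)}$ denotes the $\mu$-th derivative with respect to $\tau$. *)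

theory Defs
  imports "HOL-Analysis.Analysis"
begin

definition Phi :: "nat \<Rightarrow> real \<Rightarrow> real" where
  "Phi m t = t ^ (m + 1)"

definition eta :: "nat \<Rightarrow> real \<Rightarrow> real \<Rightarrow> real" where
  "eta m \<alpha> t = Phi m t / (Phi m t + Phi m (\<alpha> * (1 - t)))"

end

theory Submission
  imports Defs "HOL-Computational_Algebra.Polynomial"
begin

lemma rep_deriv:
  fixes q r :: "real poly"
  assumes S: "open S" and qS: "\<forall>x\<in>S. poly q x \<noteq> 0"
    and F: "\<forall>x\<in>S. F x = b + (x-c)^p * poly r x / poly q x ^ j"
    and p: "p \<ge> 1" and x: "x \<in> S"
  shows "(F has_real_derivative
     ((x-c)^(p-1) * poly (smult (real p) (r*q) + [:-c,1:] * (pderiv r * q - smult (real j) (r * pderiv q))) x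
        / poly q x^(j+1))) (at x)"
proof -
  have q0: "poly q x \<noteq> 0" using qS x by auto
  have d: "((\<lambda>x. b + (x-c)^p * poly r x / poly q x ^ j) has_real_derivative
     (real p * (x-c)^(p-1) * poly r x / poly q x^j + (x-c)^p * ((poly (pderiv r) x * poly q x ^ j - poly r x * (real j * poly q x^(j-1) * poly (pderiv q) x)) / (poly q x ^ j * poly q x ^ j)))) (at x)"
    apply (rule derivative_eq_intros refl poly_DERIV | simp add: q0)+
    apply (simp add: q0 field_simps)
    done
  have e: "real p * (x-c)^(p-1) * poly r x / poly q x^j + (x-c)^p * ((poly (pderiv r) x * poly q x ^ j - poly r x * (real j * poly q x^(j-1) * poly (pderiv q) x)) / (poly q x ^ j * poly q x ^ j))
     = (x-c)^(p-1) * poly (smult (real p) (r*q) + [:-c,1:] * (pderiv r * q - smult (real j) (r * pderiv q))) x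
        / poly q x^(j+1)"
  proof -
    obtain p' where pp: "p = Suc p'" using p by (cases p) auto
    show ?thesis
    proof (cases j)
      case 0
      then show ?thesis using q0 by (simp add: pp field_simps)
    next
      case (Suc j')
      then show ?thesis using q0 by (simp add: pp field_simps)
    qed
  qed
  show ?thesis
    apply (rule has_field_derivative_transform_within_open[OF _ S x])
     apply (rule d[unfolded e])
    using F by auto
qed

lemma rep_iter:
  fixes q r :: "real poly"
  assumes S: "open S" and qS: "\<forall>x\<in>S. poly q x \<noteq> 0"
    and F: "\<forall>x\<in>S. f x = a + (x-c)^n * poly r x / poly q x ^ j"
  shows "k \<le> n \<Longrightarrow> \<exists>r' j'. \<forall>x\<in>S. (deriv^^k) f x = (if k = 0 then a else 0) + (x-c)^(n-k) * poly r' x / poly q x ^ j'"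
proof (induction k)
  case 0
  then show ?case using F by auto
next
  case (Suc k)
  then obtain r' j' where IH: "\<forall>x\<in>S. (deriv^^k) f x = (if k = 0 then a else 0) + (x-c)^(n-k) * poly r' x / poly q x ^ j'"
    by auto
  have "\<forall>x\<in>S. deriv ((deriv^^k) f) x = (x-c)^(n-k-1) * poly (smult (real (n-k)) (r'*q) + [:-c,1:] * (pderiv r' * q - smult (real j') (r' * pderiv q))) x
        / poly q x^(j'+1)"
  proof
    fix x assume x: "x \<in> S"
    have "n - k \<ge> 1" using Suc.prems by simp
    from DERIV_imp_deriv[OF rep_deriv[OF S qS IH this x]]
    show "deriv ((deriv^^k) f) x = (x-c)^(n-k-1) * poly (smult (real (n-k)) (r'*q) + [:-c,1:] * (pderiv r' * q - smult (real j') (r' * pderiv q))) x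
        / poly q x^(j'+1)" by simp
  qed
  moreover have "n - k - 1 = n - Suc k" by simp
  ultimately have "\<forall>x\<in>S. (deriv^^(Suc k)) f x = (if Suc k = 0 then a else 0) + (x-c)^(n - Suc k) * poly (smult (real (n-k)) (r'*q) + [:-c,1:] * (pderiv r' * q - smult (real j') (r' * pderiv q))) x
        / poly q x^(j'+1)" by (simp only: funpow.simps o_apply) simp
  then show ?case by blast
qed

lemma rep_diff:
  fixes q r :: "real poly"
  assumes S: "open S" and qS: "\<forall>x\<in>S. poly q x \<noteq> 0"
    and F: "\<forall>x\<in>S. f x = a + (x-c)^n * poly r x / poly q x ^ j"
    and k: "k < n" and x: "x \<in> S"
  shows "(deriv^^k) f differentiable (at x)"
proof -
  obtain r' j' where R: "\<forall>x\<in>S. (deriv^^k) f x = (if k = 0 then a else 0) + (x-c)^(n-k) * poly r' x / poly q x ^ j'"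
    using rep_iter[OF S qS F, of k] k by (meson less_imp_le)
  show ?thesis
    using rep_deriv[OF S qS R _ x] k real_differentiable_def by fastforce
qed

lemma rep_zero:
  fixes q r :: "real poly"
  assumes S: "open S" and qS: "\<forall>x\<in>S. poly q x \<noteq> 0"
    and F: "\<forall>x\<in>S. f x = a + (x-c)^n * poly r x / poly q x ^ j"
    and k: "1 \<le> k" "k < n" and c: "c \<in> S"
  shows "(deriv^^k) f c = 0"
proof -
  obtain r' j' where R: "\<forall>x\<in>S. (deriv^^k) f x = (if k = 0 then a else 0) + (x-c)^(n-k) * poly r' x / poly q x ^ j'"
    using rep_iter[OF S qS F, of k] k by (meson less_imp_le)
  show ?thesis using R c k by auto
qed

theorem proposition2:
  fixes m :: nat and \<alpha> :: real
  assumes "\<alpha> > 0"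
  shows "(\<forall>\<mu>\<in>{1..m}.
            (\<forall>t\<in>{0..1}. ((deriv ^^ (\<mu> - 1)) (eta m \<alpha>)) differentiable (at t))
          \<and> (deriv ^^ \<mu>) (eta m \<alpha>) 0 = 0
          \<and> (deriv ^^ \<mu>) (eta m \<alpha>) 1 = 0)
       \<and> eta m \<alpha> 0 = 0 \<and> eta m \<alpha> 1 = 1
       \<and> (\<forall>t\<in>{0<..1}. ((\<lambda>a. eta m a t) \<longlongrightarrow> 1) (at_right 0))"
proof -
  define q :: "real poly" where "q = [:0,1:]^(m+1) + [:\<alpha>,-\<alpha>:]^(m+1)"
  define S where "S = {x. poly q x \<noteq> 0}"
  have pq: "poly q x = x^(m+1) + (\<alpha>*(1-x))^(m+1)" for x
    unfolding q_def by (simp add: algebra_simps)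
  have S: "open S" unfolding S_def
    by (intro open_Collect_neq continuous_intros)
  have qS: "\<forall>x\<in>S. poly q x \<noteq> 0" unfolding S_def by auto
  have I: "{0..1} \<subseteq> S"
  proof
    fix x :: real assume x: "x \<in> {0..1}"
    show "x \<in> S"
    proof (cases "x = 0")
      case True then show ?thesis using assms by (simp add: S_def pq)
    next
      case False
      then have "x^(m+1) > 0" using x by simp
      moreover have "(\<alpha>*(1-x))^(m+1) \<ge> 0" using x assms by simp
      ultimately show ?thesis by (simp add: S_def pq)
    qed
  qed
  have F0: "\<forall>x\<in>S. eta m \<alpha> x = 0 + (x-0)^(m+1) * poly 1 x / poly q x ^ 1"
    using qS by (simp add: eta_def Phi_def pq)
  have F1: "\<forall>x\<in>S. eta m \<alpha> x = 1 + (x-1)^(m+1) * poly [:- ((-\<alpha>)^(m+1)):] x / poly q x ^ 1"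
  proof
    fix x assume x: "x \<in> S"
    have d: "poly q x \<noteq> 0" using qS x by auto
    have "(\<alpha>*(1-x))^(m+1) = (-\<alpha>)^(m+1) * (x-1)^(m+1)"
      by (metis minus_diff_eq mult_minus_left mult_minus_right power_mult_distrib)
    then show "eta m \<alpha> x = 1 + (x-1)^(m+1) * poly [:- ((-\<alpha>)^(m+1)):] x / poly q x ^ 1"
      using d unfolding eta_def Phi_def pq by (simp add: field_simps)
  qed
  have P1: "\<forall>\<mu>\<in>{1..m}.
            (\<forall>t\<in>{0..1}. ((deriv ^^ (\<mu> - 1)) (eta m \<alpha>)) differentiable (at t))
          \<and> (deriv ^^ \<mu>) (eta m \<alpha>) 0 = 0
          \<and> (deriv ^^ \<mu>) (eta m \<alpha>) 1 = 0"
  proof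
    fix \<mu> assume mu: "\<mu> \<in> {1..m}"
    have "0 \<in> S" "1 \<in> S" using I by auto
    show "(\<forall>t\<in>{0..1}. ((deriv ^^ (\<mu> - 1)) (eta m \<alpha>)) differentiable (at t))
          \<and> (deriv ^^ \<mu>) (eta m \<alpha>) 0 = 0
          \<and> (deriv ^^ \<mu>) (eta m \<alpha>) 1 = 0"
      using rep_diff[OF S qS F0] rep_zero[OF S qS F0, of \<mu>] rep_zero[OF S qS F1, of \<mu>]
        mu I \<open>0 \<in> S\<close> \<open>1 \<in> S\<close> by auto
  qed
  have P2: "eta m \<alpha> 0 = 0" "eta m \<alpha> 1 = 1" by (simp_all add: eta_def Phi_def)
  have P3: "\<forall>t\<in>{0<..1}. ((\<lambda>a. eta m a t) \<longlongrightarrow> 1) (at_right 0)"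
  proof
    fix t :: real assume t: "t \<in> {0<..1}"
    have "((\<lambda>a. t^(m+1) / (t^(m+1) + (a*(1-t))^(m+1))) \<longlongrightarrow> t^(m+1) / (t^(m+1) + (0*(1-t))^(m+1))) (at_right 0)"
      using t by (intro tendsto_intros) auto
    then show "((\<lambda>a. eta m a t) \<longlongrightarrow> 1) (at_right 0)"
      using t by (simp add: eta_def Phi_def)
  qed
  show ?thesis using P1 P2 P3 by blast
qed

end
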